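(* Assume $\chi$ is weakly generic, let $\sigma=\sigma_{a,b}$ be a Serre weight with $\mathcal{S}(\chi_1,\chi_2,\sigma)\neq\varnothing$, let $(J,x)$ be its maximal element, and let $s,t,r,\xi$ be as in the context. Suppose $\kappa\in\Sigma$ satisfies $t_\kappa<r_\kappa$. Then $v_p(\xi_\kappa-t_\kappa(p^f-1))>1$ if and only if $e=1$ and $r_\tau=p$, $n_\tau=1$ and $t_\tau=0$ for all $\tau\in\Sigma$.
   Context: Let $p$ be a prime, $K/\mathbf{Q}_p$ finite with residue field $k$, residue degree $f$, ramification index $e$; $I_K$ inertia; $v_p$ is the $p$-adic valuation on $\mathbf{Q}$. Fix $\varpi\in\overline{K}$ with $\varpi^{p^f-1}$ a uniformiser; $\omega\colon G_K\to k^\times$ sends $g$ to the reduction of $g(\varpi)/\varpi$. $\Sigma=\mathrm{Hom}_{\mathbf{F}_p}(k,\overline{\mathbf{F}}_p)$, $\varphi(x)=x^p$, $\omega_\tau=\tau\circ\omega$, $\Omega_{\tau,a}=\sum_{i=0}^{f-1}p^ia_{\tau\circ\varphi^i}$. $\chi_1,\chi_2\colon G_K\to\overline{\mathbf{F}}_p^\times$ continuous, $\chi=\chi_1\chi_2^{-1}=\psi\prod_\tau\omega_\tau^{n_\tau}$, $\psi$ unramified, $n_\tau\in[1,p]$, some $n_\tau<p$. Weakly generic: $n_\tau\in[e,p-e]$ for all $\tau$. Serre weight $\sigma_{a,b}=\bigotimes_\tau(\det^{b_\tau}\otimes\mathrm{Sym}^{a_\tau-b_\tau}k^2)\otimes_{k,\tau}\overline{\mathbf{F}}_p$,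 $a_\tau-b_\tau\in[0,p-1]$; $r_\tau=a_\tau-b_\tau+1$. $\mathcal{S}(\chi_1,\chi_2,\sigma)$: pairs $(J,x)$, $J\subseteq\Sigma$, $x_\tau\in[0,e-1]$, with $\chi_1|_{I_K}=\prod_{\tau\in J}\omega_\tau^{a_\tau+1+x_\tau}\prod_{\tau\notin J}\omega_\tau^{b_\tau+x_\tau}$ and $\chi_2|_{I_K}=\prod_{\tau\notin J}\omega_\tau^{a_\tau+e-x_\tau}\prod_{\tau\in J}\omega_\tau^{b_\tau+e-1-x_\tau}$. $s(J,x)_\tau=r_\tau+x_\tau$ if $\tau\in J$, $x_\tau$ if $\tau\notin J$. Order: $(J,x)\preceq(J',x')$ iff $\Omega_{\tau,s(J',x')-s(J,x)}\in(p^f-1)\mathbf{Z}_{\ge0}$ for all $\tau$; a non-empty $\mathcal{S}$ has a unique maximal element. For the maximal $(J,x)$: $s=s(J,x)$, $t_\tau=a_\tau-b_\tau+e-s_\tau$, $\xi_\tau=(p^f-1)s_\tau+\Omega_{\tau,s-t}$. *)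

theory Defs
  imports "HOL-Number_Theory.Number_Theory" "HOL-Library.Extended_Nat"
begin

text \<open>Concrete model. \<Sigma> = Hom(k, Fpbar) is indexed by i < f via tau_i = tau_0 o phi^i,
  so tau_i o phi^j = tau_((i+j) mod f). Functions on \<Sigma> are functions nat => _ read on {..<f}.
  Since omega_(tau_i) = omega_(tau_0)^(p^i) and omega_(tau_0) restricted to inertia has exact
  order p^f - 1, a character of inertia of the form prod_tau omega_tau^(c_tau) is omega_(tau_0)
  to the power Omega_(tau_0, c), and equality of such characters is congruence of exponents
  modulo p^f - 1. A character chi_j of G_K restricted to I_K is recorded by its exponent
  cj (chi_j|I_K = omega_(tau_0)^cj).\<close>

definition Omega :: "nat \<Rightarrow> nat \<Rightarrow> nat \<Rightarrow> (nat \<Rightarrow> int) \<Rightarrow> int" where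
  "Omega p f i a = (\<Sum>j<f. int p ^ j * a ((i + j) mod f))"

definition rr :: "(nat \<Rightarrow> int) \<Rightarrow> (nat \<Rightarrow> int) \<Rightarrow> nat \<Rightarrow> int" where
  "rr a b i = a i - b i + 1"

definition Sset :: "nat \<Rightarrow> nat \<Rightarrow> nat \<Rightarrow> (nat \<Rightarrow> int) \<Rightarrow> (nat \<Rightarrow> int) \<Rightarrow> int \<Rightarrow> int
    \<Rightarrow> (nat set \<times> (nat \<Rightarrow> nat)) set" where
  "Sset p f e a b c1 c2 = {(J, x). J \<subseteq> {..<f} \<and> (\<forall>i<f. x i \<le> e - 1) \<and> (\<forall>i\<ge>f. x i = 0) \<and>
     [c1 = Omega p f 0 (\<lambda>i. if i \<in> J then a i + 1 + int (x i) else b i + int (x i))]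
        (mod (int p ^ f - 1)) \<and>
     [c2 = Omega p f 0 (\<lambda>i. if i \<notin> J then a i + int e - int (x i) else b i + int e - 1 - int (x i))]
        (mod (int p ^ f - 1))}"

definition sv :: "(nat \<Rightarrow> int) \<Rightarrow> (nat \<Rightarrow> int) \<Rightarrow> nat set \<times> (nat \<Rightarrow> nat) \<Rightarrow> nat \<Rightarrow> int" where
  "sv a b Jx i = (if i \<in> fst Jx then rr a b i + int (snd Jx i) else int (snd Jx i))"

definition prec :: "nat \<Rightarrow> nat \<Rightarrow> (nat \<Rightarrow> int) \<Rightarrow> (nat \<Rightarrow> int) \<Rightarrow>
    nat set \<times> (nat \<Rightarrow> nat) \<Rightarrow> nat set \<times> (nat \<Rightarrow> nat) \<Rightarrow> bool" where
  "prec p f a b Jx Jx' \<longleftrightarrow>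
     (\<forall>i<f. \<exists>m::nat. Omega p f i (\<lambda>j. sv a b Jx' j - sv a b Jx j) = (int p ^ f - 1) * int m)"

definition tv :: "nat \<Rightarrow> (nat \<Rightarrow> int) \<Rightarrow> (nat \<Rightarrow> int) \<Rightarrow> nat set \<times> (nat \<Rightarrow> nat) \<Rightarrow> nat \<Rightarrow> int" where
  "tv e a b Jx i = a i - b i + int e - sv a b Jx i"

definition xiv :: "nat \<Rightarrow> nat \<Rightarrow> nat \<Rightarrow> (nat \<Rightarrow> int) \<Rightarrow> (nat \<Rightarrow> int) \<Rightarrow> nat set \<times> (nat \<Rightarrow> nat)
    \<Rightarrow> nat \<Rightarrow> int" where
  "xiv p f e a b Jx i = (int p ^ f - 1) * sv a b Jx i + Omega p f i (\<lambda>j. sv a b Jx j - tv e a b Jx j)"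

definition vp :: "nat \<Rightarrow> int \<Rightarrow> enat" where
  "vp p z = (if z = 0 then \<infinity> else enat (multiplicity (int p) z))"

end

theory Submission
  imports Defs
begin


lemma Omega_mod: "Omega p f (i mod f) g = Omega p f i g"
  unfolding Omega_def by (simp add: mod_add_left_eq)

lemma Omega_add_f: "Omega p f (i + f) g = Omega p f i g"
  by (metis Omega_mod mod_add_self2)

lemma Omega_cong: assumes "0 < f" "\<forall>k<f. g k = h k" shows "Omega p f i g = Omega p f i h"
  unfolding Omega_def using assms by (intro sum.cong) auto

lemma Omega_add: "Omega p f i (\<lambda>j. g j + h j) = Omega p f i g + Omega p f i h"
  unfolding Omega_def by (simp add: algebra_simps sum.distrib)

lemma Omega_diff: "Omega p f i (\<lambda>j. g j - h j) = Omega p f i g - Omega p f i h"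
  unfolding Omega_def by (simp add: algebra_simps sum_subtractf)

lemma Omega_const: "Omega p f i (\<lambda>j. c) = c * (\<Sum>j<f. int p ^ j)"
  unfolding Omega_def by (simp add: sum_distrib_left mult.commute)

lemma geom: "(int p - 1) * (\<Sum>j<f. int p ^ j) = int p ^ f - 1"
  by (simp add: power_diff_1_eq)

lemma Omega_rec: assumes "0 < f"
  shows "Omega p f i g + (int p ^ f - 1) * g (i mod f) = int p * Omega p f (Suc i) g"
proof -
  obtain f' where f: "f = Suc f'" using assms by (cases f) auto
  have A: "Omega p f i g = g (i mod f) + (\<Sum>j<f'. int p ^ Suc j * g ((i + Suc j) mod f))"
    unfolding Omega_def f by (subst sum.lessThan_Suc_shift) simp
  have "int p * Omega p f (Suc i) g = (\<Sum>j<f. int p ^ Suc j * g ((i + Suc j) mod f))"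
    unfolding Omega_def by (simp add: sum_distrib_left algebra_simps)
  also have "\<dots> = (\<Sum>j<f'. int p ^ Suc j * g ((i + Suc j) mod f)) + int p ^ Suc f' * g ((i + Suc f') mod f)"
    unfolding f by (rule sum.lessThan_Suc)
  also have "(i + Suc f') mod f = i mod f" using f by (metis mod_add_self2)
  also have "int p ^ Suc f' = int p ^ f" using f by simp
  finally show ?thesis using A by (simp add: algebra_simps)
qed

lemma Omega_dvd_p: assumes "0 < f" shows "int p dvd (Omega p f i g - g (i mod f))"
proof -
  obtain f' where f: "f = Suc f'" using assms by (cases f) auto
  have A: "Omega p f i g = g (i mod f) + int p * (\<Sum>j<f'. int p ^ j * g ((i + Suc j) mod f))"
    unfolding Omega_def f by (subst sum.lessThan_Suc_shift) (simp add: sum_distrib_left algebra_simps)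
  show ?thesis by (simp add: A)
qed

lemma Omega_tele: assumes "0 < f" "\<forall>k. C k = C (k mod f)"
  shows "Omega p f i (\<lambda>k. int p * C (Suc k) - C k) = (int p ^ f - 1) * C i"
proof -
  have "Omega p f i (\<lambda>k. int p * C (Suc k) - C k)
      = (\<Sum>j<f. int p ^ Suc j * C (i + Suc j) - int p ^ j * C (i + j))"
    unfolding Omega_def
  proof (intro sum.cong refl)
    fix j
    have "C (Suc ((i + j) mod f)) = C (i + Suc j)"
      by (metis assms(2) add_Suc_right mod_Suc_eq)
    moreover have "C ((i + j) mod f) = C (i + j)" using assms(2) by metis
    ultimately show "int p ^ j * (int p * C (Suc ((i + j) mod f)) - C ((i + j) mod f))
       = int p ^ Suc j * C (i + Suc j) - int p ^ j * C (i + j)" by (simp add: algebra_simps)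
  qed
  also have "\<dots> = int p ^ f * C (i + f) - C i"
    using sum_lessThan_telescope[of "\<lambda>j. int p ^ j * C (i + j)" f] by simp
  also have "C (i + f) = C i" by (metis assms(2) mod_add_self2)
  finally show ?thesis by (simp add: algebra_simps)
qed

lemma mod_hit: fixes f k i :: nat assumes "0 < f" "k < f" shows "\<exists>j<f. (i + j) mod f = k"
proof -
  let ?j = "(k + f - i mod f) mod f"
  have "(i + ?j) mod f = (i + (k + f - i mod f)) mod f" by (simp add: mod_add_right_eq)
  also have "i + (k + f - i mod f) = f * (i div f) + k + f"
    using minus_mod_eq_mult_div[of i f] mod_less_eq_dividend[of i f] mod_less_divisor[OF assms(1), of i] by linarith
  also have "(f * (i div f) + k + f) mod f = k" using assms by simp
  finally show ?thesis using assms by (intro exI[of _ ?j]) auto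
qed

lemma Omega_ge_term: assumes "0 < f" "1 \<le> p" "\<forall>j<f. 0 \<le> w j" "k < f"
  shows "w k \<le> Omega p f i w"
proof -
  obtain j where j: "j < f" "(i + j) mod f = k" using mod_hit assms by blast
  have "w k \<le> int p ^ j * w ((i + j) mod f)"
    using j assms mult_right_mono[of 1 "int p ^ j" "w k"] by simp
  also have "\<dots> \<le> Omega p f i w" unfolding Omega_def
    by (rule member_le_sum[where f="\<lambda>j. int p ^ j * w ((i + j) mod f)"]) (use j assms in auto)
  finally show ?thesis .
qed

lemma vp_gt1: assumes "prime p" shows "(vp p (int p * X) > 1) = (int p dvd X)"
proof (cases "X = 0")
  case True then show ?thesis by (simp add: vp_def)
next
  case False
  have p: "int p \<noteq> 0" "\<not> is_unit (int p)" using assms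
    by (auto simp: prime_gt_0_nat)
  have nz: "int p * X \<noteq> 0" using False p by simp
  have "(vp p (int p * X) > 1) = (2 \<le> multiplicity (int p) (int p * X))"
    using nz by (auto simp: vp_def one_enat_def)
  also have "\<dots> = (int p ^ 2 dvd int p * X)"
    using power_dvd_iff_le_multiplicity[OF nz p(2)] by simp
  also have "\<dots> = (int p dvd X)" using p by (simp add: power2_eq_square)
  finally show ?thesis .
qed



lemma mod_lt2: fixes x f :: nat assumes "x < 2 * f" shows "x mod f = (if x < f then x else x - f)"
  using assms by (auto simp: le_mod_geq)

lemma A1: fixes f k \<kappa> :: nat assumes "\<kappa> < f" "k < f"
  shows "(\<kappa> + f - 1 - (\<kappa> + f - 1 - k) mod f) mod f = k"
proof -
  have "\<kappa> + f - 1 - k < 2 * f" using assms by linarith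
  then have e: "(\<kappa> + f - 1 - k) mod f = (if \<kappa> + f - 1 - k < f then \<kappa> + f - 1 - k else \<kappa> + f - 1 - k - f)"
    by (rule mod_lt2)
  show ?thesis
  proof (cases "\<kappa> + f - 1 - k < f")
    case True then show ?thesis using e assms by simp
  next
    case False
    then have "\<kappa> + f - 1 - (\<kappa> + f - 1 - k - f) = k + f" using assms by linarith
    then show ?thesis using e False assms by simp
  qed
qed

lemma A2: fixes f k \<kappa> :: nat assumes "\<kappa> < f" "k < f"
  shows "(\<kappa> + f - 1 - (k + f - 1) mod f) mod f
     = (if (\<kappa> + f - 1 - k) mod f = f - 1 then 0 else (\<kappa> + f - 1 - k) mod f + 1)"
proof -
  have e1: "(k + f - 1) mod f = (if k = 0 then f - 1 else k - 1)"
    using mod_lt2[of "k + f - 1" f] assms by auto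
  have e2: "(\<kappa> + f - 1 - k) mod f = (if \<kappa> + f - 1 - k < f then \<kappa> + f - 1 - k else \<kappa> + f - 1 - k - f)"
    using mod_lt2[of "\<kappa> + f - 1 - k" f] assms by linarith
  show ?thesis
  proof (cases "k = 0")
    case True
    then have "(\<kappa> + f - 1 - (k + f - 1) mod f) mod f = \<kappa>" using e1 assms by simp
    moreover have "(\<kappa> + f - 1 - k) mod f = (if \<kappa> = 0 then f - 1 else \<kappa> - 1)"
      using e2 True assms by auto
    ultimately show ?thesis using assms by auto
  next
    case False
    then have x: "(\<kappa> + f - 1 - (k + f - 1) mod f) mod f = (\<kappa> + f - k) mod f" using e1 assms by simp
    have e3: "(\<kappa> + f - k) mod f = (if \<kappa> + f - k < f then \<kappa> + f - k else \<kappa> + f - k - f)"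
      using mod_lt2[of "\<kappa> + f - k" f] assms False by linarith
    show ?thesis
    proof (cases "\<kappa> + f - 1 - k < f")
      case True
      then have "\<kappa> + f - k < f \<or> \<kappa> + f - k = f" by linarith
      then show ?thesis
      proof
        assume h: "\<kappa> + f - k < f"
        then have "(\<kappa> + f - 1 - k) mod f = \<kappa> + f - 1 - k" "(\<kappa> + f - k) mod f = \<kappa> + f - k" using e2 e3 True by auto
        moreover have "\<kappa> + f - 1 - k \<noteq> f - 1" using h False assms by linarith
        moreover have "\<kappa> + f - k = \<kappa> + f - 1 - k + 1" using h False assms by linarith
        ultimately show ?thesis using x by simp
      next
        assume h: "\<kappa> + f - k = f"
        then have "(\<kappa> + f - 1 - k) mod f = f - 1" using e2 True by auto
        then show ?thesis using x h by simp
      qed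
    next
      case F: False
      then have "(\<kappa> + f - 1 - k) mod f = \<kappa> + f - 1 - k - f" "(\<kappa> + f - k) mod f = \<kappa> + f - k - f" using e2 e3 by auto
      moreover have "\<kappa> + f - 1 - k - f \<noteq> f - 1" "\<kappa> + f - k - f = \<kappa> + f - 1 - k - f + 1" using F assms False by linarith+
      ultimately show ?thesis using x by simp
    qed
  qed
qed



lemma sv_lam1: "(\<lambda>i. if i \<in> J then a i + 1 + int (x i) else b i + int (x i)) = (\<lambda>i. b i + sv a b (J, x) i)"
  unfolding sv_def rr_def by auto

lemma sv_lam2: "(\<lambda>i. if i \<notin> J then a i + int e - int (x i) else b i + int e - 1 - int (x i)) = (\<lambda>i. a i + int e - sv a b (J, x) i)"
  unfolding sv_def rr_def by auto

theorem proposition5p12: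
  fixes p f e :: nat and a b :: "nat \<Rightarrow> int" and n :: "nat \<Rightarrow> nat"
    and c1 c2 :: int and J :: "nat set" and x :: "nat \<Rightarrow> nat" and \<kappa> :: nat
  assumes "prime p" and "f \<ge> 1" and "e \<ge> 1"
    and n_range: "\<forall>i<f. 1 \<le> n i \<and> n i \<le> p" and n_some: "\<exists>i<f. n i < p"
    and chi: "[c1 - c2 = Omega p f 0 (\<lambda>i. int (n i))] (mod (int p ^ f - 1))"
    and weakly_generic: "\<forall>i<f. int e \<le> int (n i) \<and> int (n i) \<le> int p - int e"
    and weight: "\<forall>i<f. 0 \<le> a i - b i \<and> a i - b i \<le> int p - 1"
    and Jx_in: "(J, x) \<in> Sset p f e a b c1 c2"
    and Jx_max: "\<forall>y \<in> Sset p f e a b c1 c2. prec p f a b y (J, x)"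
    and "\<kappa> < f"
    and t_lt_r: "tv e a b (J, x) \<kappa> < rr a b \<kappa>"
  shows "vp p (xiv p f e a b (J, x) \<kappa> - tv e a b (J, x) \<kappa> * (int p ^ f - 1)) > 1
     \<longleftrightarrow> (e = 1 \<and> (\<forall>i<f. rr a b i = int p \<and> n i = 1 \<and> tv e a b (J, x) i = 0))"
proof -
  have p2: "p \<ge> 2" using assms(1) prime_ge_2_nat by blast
  have f0: "0 < f" using assms(2) by simp
  define N where "N = int p ^ f - 1"
  have pf: "int p ^ f \<ge> int p ^ 1" using p2 assms(2) by (intro power_increasing) auto
  have pf': "int p ^ f \<ge> int p" using pf by simp
  have Npos: "N > 0" using pf' p2 unfolding N_def by linarith
  have NG: "(int p - 1) * (\<Sum>j<f. int p ^ j) = N" unfolding N_def by (rule geom)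
  define s where "s = sv a b (J, x)"
  define r where "r = rr a b"
  define t where "t = tv e a b (J, x)"
  have t_eq: "\<And>i. t i = r i - 1 + int e - s i" unfolding t_def r_def s_def tv_def rr_def by simp
  have SJ: "J \<subseteq> {..<f}" "\<forall>i<f. x i \<le> e - 1"
    and cg1: "[c1 = Omega p f 0 (\<lambda>i. if i \<in> J then a i + 1 + int (x i) else b i + int (x i))] (mod N)"
    and cg2: "[c2 = Omega p f 0 (\<lambda>i. if i \<notin> J then a i + int e - int (x i) else b i + int e - 1 - int (x i))] (mod N)"
    using Jx_in unfolding Sset_def N_def by simp_all
  have s_val: "\<forall>i<f. (0 \<le> s i \<and> s i \<le> int e - 1) \<or> (r i \<le> s i \<and> s i \<le> r i + int e - 1)"
  proof (intro allI impI)
    fix i assume "i < f"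
    then have "int (x i) \<le> int e - 1" using SJ assms(3) by auto
    then show "(0 \<le> s i \<and> s i \<le> int e - 1) \<or> (r i \<le> s i \<and> s i \<le> r i + int e - 1)"
      unfolding s_def r_def sv_def by auto
  qed
  have r_rng: "\<forall>i<f. 1 \<le> r i \<and> r i \<le> int p" using weight unfolding r_def rr_def by auto
  have e2: "2 * int e \<le> int p" using weakly_generic f0 by fastforce
  have n_rng: "\<forall>i<f. int e \<le> int (n i) \<and> int (n i) \<le> int p - int e" using weakly_generic by auto
  define d where "d = (\<lambda>j. s j - t j)"
  have d_eq: "\<And>j. d j = 2 * s j - r j - int e + 1" unfolding d_def using t_eq by simp
  have Q: "xiv p f e a b (J, x) \<kappa> - t \<kappa> * N = int p * Omega p f (Suc \<kappa>) d"
  proof -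
    have "xiv p f e a b (J, x) \<kappa> = N * s \<kappa> + Omega p f \<kappa> d"
      unfolding xiv_def N_def s_def d_def t_def by simp
    moreover have "Omega p f \<kappa> d + N * d \<kappa> = int p * Omega p f (Suc \<kappa>) d"
      using Omega_rec[OF f0, of p \<kappa> d] \<open>\<kappa> < f\<close> unfolding N_def by simp
    ultimately show ?thesis unfolding d_def by (simp add: algebra_simps)
  qed
  define \<kappa>' where "\<kappa>' = Suc \<kappa> mod f"
  have k'f: "\<kappa>' < f" unfolding \<kappa>'_def using f0 by simp
  have P: "int p dvd Omega p f (Suc \<kappa>) d \<longleftrightarrow> int p dvd d \<kappa>'"
  proof -
    have h: "int p dvd (Omega p f (Suc \<kappa>) d - d \<kappa>')"
      using Omega_dvd_p[OF f0, of p "Suc \<kappa>" d] unfolding \<kappa>'_def .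
    have "Omega p f (Suc \<kappa>) d = (Omega p f (Suc \<kappa>) d - d \<kappa>') + d \<kappa>'" by simp
    then show ?thesis using dvd_add_right_iff[OF h, of "d \<kappa>'"] by simp
  qed
  have LHS: "vp p (xiv p f e a b (J, x) \<kappa> - tv e a b (J, x) \<kappa> * (int p ^ f - 1)) > 1
      \<longleftrightarrow> int p dvd d \<kappa>'"
    using Q P vp_gt1[OF assms(1)] unfolding t_def N_def by simp
  have main: "int p dvd d \<kappa>' \<longleftrightarrow> (e = 1 \<and> (\<forall>i<f. r i = int p \<and> n i = 1 \<and> t i = 0))"
  proof
    assume H: "e = 1 \<and> (\<forall>i<f. r i = int p \<and> n i = 1 \<and> t i = 0)"
    then have "r \<kappa>' = int p" "t \<kappa>' = 0" "e = 1" using k'f by auto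
    then have "d \<kappa>' = int p" using t_eq[of \<kappa>'] unfolding d_def by simp
    then show "int p dvd d \<kappa>'" by simp
  next
    assume pd: "int p dvd d \<kappa>'"
    define W where "W = (\<lambda>j. d j - int (n j))"
    have W_eq: "\<And>j. W j = 2 * s j - r j - int e + 1 - int (n j)" unfolding W_def using d_eq by simp
    have cls: "N dvd Omega p f 0 W"
    proof -
      have e1: "(\<lambda>i. if i \<in> J then a i + 1 + int (x i) else b i + int (x i)) = (\<lambda>i. b i + s i)"
        unfolding s_def sv_def rr_def by auto
      have e2': "(\<lambda>i. if i \<notin> J then a i + int e - int (x i) else b i + int e - 1 - int (x i)) = (\<lambda>i. a i + int e - s i)"
        unfolding s_def sv_def rr_def by auto
      have "[c1 - c2 = Omega p f 0 (\<lambda>i. b i + s i) - Omega p f 0 (\<lambda>i. a i + int e - s i)] (mod N)"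
        using cong_diff[OF cg1 cg2] e1 e2' by simp
      also have "Omega p f 0 (\<lambda>i. b i + s i) - Omega p f 0 (\<lambda>i. a i + int e - s i) = Omega p f 0 d"
      proof -
        have "(\<lambda>i. (b i + s i) - (a i + int e - s i)) = d"
          using d_eq unfolding r_def rr_def by (auto simp: algebra_simps)
        then show ?thesis using Omega_diff[of p f 0 "\<lambda>i. b i + s i" "\<lambda>i. a i + int e - s i"] by simp
      qed
      finally have c3: "[c1 - c2 = Omega p f 0 d] (mod N)" .
      have c4: "[c1 - c2 = Omega p f 0 (\<lambda>i. int (n i))] (mod N)" using chi unfolding N_def .
      have "[Omega p f 0 d = Omega p f 0 (\<lambda>i. int (n i))] (mod N)"
        using cong_trans[OF cong_sym[OF c3] c4] .
      then show ?thesis unfolding W_def cong_iff_dvd_diff by (simp add: Omega_diff)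
    qed
    have allN: "N dvd Omega p f i W" for i
    proof (induction i)
      case 0 show ?case using cls .
    next
      case (Suc i)
      let ?X = "Omega p f (Suc i) W"
      have h: "int p * ?X = Omega p f i W + N * W (i mod f)"
        using Omega_rec[OF f0, of p i W] unfolding N_def by simp
      have d1: "N dvd int p * ?X" unfolding h using Suc.IH by simp
      obtain f' where f': "f = Suc f'" using f0 by (cases f) auto
      have pp: "int p ^ (f - 1) * int p = N + 1" unfolding N_def f' by (simp add: power_Suc2)
      have "int p ^ (f - 1) * (int p * ?X) = (N + 1) * ?X" using pp by (metis mult.assoc)
      then have "?X = int p ^ (f - 1) * (int p * ?X) - N * ?X" by (simp add: algebra_simps)
      moreover have "N dvd int p ^ (f - 1) * (int p * ?X) - N * ?X"
        using dvd_diff[OF dvd_mult[OF d1, of "int p ^ (f - 1)"] dvd_triv_left[of N ?X]] .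
      ultimately show ?case by simp
    qed
    define M where "M = (\<lambda>i. Omega p f i W div N)"
    have OM: "\<And>i. Omega p f i W = N * M i" unfolding M_def using allN by simp
    have rel: "\<And>i. W (i mod f) = int p * M (Suc i) - M i"
    proof -
      fix i
      have "Omega p f i W + N * W (i mod f) = int p * Omega p f (Suc i) W"
        using Omega_rec[OF f0, of p i W] unfolding N_def .
      then have "N * M i + N * W (i mod f) = int p * (N * M (Suc i))"
        unfolding OM .
      then have "N * (M i + W (i mod f)) = N * (int p * M (Suc i))" by (simp add: algebra_simps)
      then have "M i + W (i mod f) = int p * M (Suc i)" using Npos by simp
      then show "W (i mod f) = int p * M (Suc i) - M i" by simp
    qed
    have Mmod: "\<And>i. M (i mod f) = M i" by (simp add: M_def Omega_mod)
    have Mf: "\<And>i. M (i + f) = M i" by (simp add: M_def Omega_add_f)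
    have Wb: "\<forall>j<f. -(2 * int p - 1) \<le> W j \<and> W j \<le> int p - 1"
    proof (intro allI impI)
      fix j assume j: "j < f"
      show "-(2 * int p - 1) \<le> W j \<and> W j \<le> int p - 1"
        using W_eq[of j] s_val[rule_format, OF j] r_rng[rule_format, OF j] n_rng[rule_format, OF j] by linarith
    qed
    have sk: "r \<kappa> \<le> s \<kappa>" using t_lt_r t_eq[of \<kappa>] s_val[rule_format, OF \<open>\<kappa> < f\<close>] unfolding t_def r_def by linarith
    have Wk: "W \<kappa> \<ge> 2 - int p"
      using W_eq[of \<kappa>] sk r_rng[rule_format, OF \<open>\<kappa> < f\<close>] n_rng[rule_format, OF \<open>\<kappa> < f\<close>] by linarith
    have Mlow: "M i \<ge> -2" for i
    proof -
      have "Omega p f i (\<lambda>j. W j + 3 * (int p - 1)) = N * M i + 3 * N"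
        using Omega_add[of p f i W "\<lambda>j. 3 * (int p - 1)"] Omega_const[of p f i "3 * (int p - 1)"] NG OM[of i]
        by (simp add: algebra_simps)
      moreover have "W \<kappa> + 3 * (int p - 1) \<le> Omega p f i (\<lambda>j. W j + 3 * (int p - 1))"
        by (rule Omega_ge_term) (use f0 p2 Wb \<open>\<kappa> < f\<close> in auto)
      ultimately have "0 < N * (M i + 3)" using Wk p2 by (simp add: algebra_simps)
      then show "M i \<ge> -2" using Npos by (simp add: zero_less_mult_iff)
    qed
    have Mup: "M i \<le> 1 \<and> (M i = 1 \<longrightarrow> (\<forall>k<f. W k = int p - 1))" for i
    proof -
      have O: "Omega p f i (\<lambda>j. (int p - 1) - W j) = N * (1 - M i)"
        using Omega_diff[of p f i "\<lambda>j. int p - 1" W] Omega_const[of p f i "int p - 1"] NG OM[of i]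
        by (simp add: algebra_simps)
      have T: "(int p - 1) - W k \<le> N * (1 - M i)" if "k < f" for k
        unfolding O[symmetric] by (rule Omega_ge_term) (use f0 p2 Wb that in auto)
      have "0 \<le> N * (1 - M i)" using T[OF f0] Wb[rule_format, OF f0] by linarith
      then have "M i \<le> 1" using Npos by (simp add: zero_le_mult_iff)
      moreover have "\<forall>k<f. W k = int p - 1" if "M i = 1"
      proof (intro allI impI)
        fix k assume k: "k < f"
        show "W k = int p - 1" using T[OF k] Wb[rule_format, OF k] that by simp
      qed
      ultimately show ?thesis by blast
    qed
    have key: "M (Suc \<kappa>) \<ge> 0"
    proof (rule ccontr)
      assume neg: "\<not> 0 \<le> M (Suc \<kappa>)"
      have kf: "\<kappa> < f" by fact
      have r0: "W \<kappa> = int p * M (Suc \<kappa>) - M \<kappa>" using rel[of \<kappa>] kf by simp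
      have "int p * M (Suc \<kappa>) \<le> int p * (-1)" using neg p2 by (intro mult_left_mono) auto
      then have "2 * s \<kappa> - r \<kappa> + 1 \<le> - M \<kappa>"
        using r0 W_eq[of \<kappa>] n_rng[rule_format, OF kf] by linarith
      then have sk1: "s \<kappa> = 1" "r \<kappa> = 1" "M \<kappa> = -2"
        using Mlow[of \<kappa>] sk r_rng[rule_format, OF kf] by linarith+
      have walk: "s (j mod f) = 0 \<and> (r (j mod f) = int p \<or> (r (j mod f) = int p - 1 \<and> M j = -2))"
        if h: "M (Suc j) = -2" for j
      proof -
        have m: "j mod f < f" using f0 by simp
        have w: "W (j mod f) = int p * (-2) - M j" using rel[of j] h by simp
        have "2 * s (j mod f) \<le> 1"
          using w W_eq[of "j mod f"] Mlow[of j] n_rng[rule_format, OF m] r_rng[rule_format, OF m] by linarith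
        then have s0: "s (j mod f) = 0" using s_val[rule_format, OF m] r_rng[rule_format, OF m] by arith
        have "r (j mod f) = int p \<or> (r (j mod f) = int p - 1 \<and> M j = -2)"
          using w W_eq[of "j mod f"] s0 Mlow[of j] n_rng[rule_format, OF m] r_rng[rule_format, OF m] by linarith
        then show ?thesis using s0 by blast
      qed
      define jj where "jj = (\<lambda>l::nat. \<kappa> + f - 1 - l)"
      have ind: "l \<le> f - 1 \<longrightarrow> (\<forall>l'<l. r (jj l' mod f) \<noteq> int p) \<longrightarrow> M (Suc (jj l)) = -2" for l
      proof (induction l)
        case 0
        have "Suc (jj 0) = \<kappa> + f" using f0 by (simp add: jj_def)
        then show ?case using Mf[of \<kappa>] sk1(3) by simp
      next
        case (Suc l)
        show ?case
        proof (intro impI)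
          assume a1: "Suc l \<le> f - 1" and a2: "\<forall>l'<Suc l. r (jj l' mod f) \<noteq> int p"
          have "M (Suc (jj l)) = -2" using Suc.IH a1 a2 by auto
          then have "M (jj l) = -2" using walk[of "jj l"] a2 by auto
          moreover have "jj l = Suc (jj (Suc l))" using a1 by (simp add: jj_def)
          ultimately show "M (Suc (jj (Suc l))) = -2" by simp
        qed
      qed
      have jjk: "jj (f - 1) = \<kappa>" using f0 by (simp add: jj_def)
      have ex: "\<exists>l. l < f - 1 \<and> r (jj l mod f) = int p"
      proof (rule ccontr)
        assume "\<not> (\<exists>l. l < f - 1 \<and> r (jj l mod f) = int p)"
        then have "M (Suc \<kappa>) = -2" using ind[of "f - 1"] jjk by auto
        then have "s (\<kappa> mod f) = 0" using walk by blast
        then show False using sk1 kf by simp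
      qed
      then obtain L where L: "L < f - 1" "r (jj L mod f) = int p"
          "\<forall>m<L. \<not> (m < f - 1 \<and> r (jj m mod f) = int p)"
        using exists_least_iff[of "\<lambda>l. l < f - 1 \<and> r (jj l mod f) = int p"] by blast
      have M2: "M (Suc (jj l)) = -2" if "l \<le> L" for l
        using ind[of l] that L by auto
      have Fs: "s (jj l mod f) = 0" if "l \<le> L" for l using walk M2 that by blast
      have Fr: "r (jj l mod f) = int p - 1" if "l < L" for l
        using walk[of "jj l"] M2[of l] that L(1,3) by auto
      define lf where "lf = (\<lambda>k::nat. (\<kappa> + f - 1 - k mod f) mod f)"
      define c where "c = (\<lambda>k. if lf k \<le> L then (1::int) else 0)"
      define Y where "Y = (\<lambda>k. s k + int p * c k - c (k + f - 1))"
      have A1': "jj (lf k) mod f = k" if "k < f" for k using A1[OF kf that] that by (simp add: jj_def lf_def)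
      have A2': "lf (k + f - 1) = (if lf k = f - 1 then 0 else lf k + 1)" if "k < f" for k
        using A2[OF kf that] that by (simp add: lf_def)
      have lflt: "lf k < f" for k using f0 by (simp add: lf_def)
      have Yval: "(0 \<le> Y k \<and> Y k \<le> int e - 1) \<or> (r k \<le> Y k \<and> Y k \<le> r k + int e - 1)" if k: "k < f" for k
      proof -
        have kk: "jj (lf k) mod f = k" using A1' k by simp
        consider (a) "lf k < L" | (b) "lf k = L" | (c) "L < lf k" "lf k < f - 1" | (d) "lf k = f - 1"
          using lflt[of k] by linarith
        then show ?thesis
        proof cases
          case a
          then have "c k = 1" "c (k + f - 1) = 1" using A2'[OF k] L(1) by (auto simp: c_def)
          moreover have "s k = 0" "r k = int p - 1" using Fs[of "lf k"] Fr[of "lf k"] a kk by auto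
          ultimately show ?thesis using assms(3) by (simp add: Y_def)
        next
          case b
          then have "c k = 1" "c (k + f - 1) = 0" using A2'[OF k] L(1) by (auto simp: c_def)
          moreover have "s k = 0" "r k = int p" using Fs[of "lf k"] L(2) b kk by auto
          ultimately show ?thesis using assms(3) by (simp add: Y_def)
        next
          case c
          then have "c k = 0" "c (k + f - 1) = 0" using A2'[OF k] by (auto simp: c_def)
          then show ?thesis using s_val[rule_format, OF k] by (simp add: Y_def)
        next
          case d
          then have "c k = 0" "c (k + f - 1) = 1" using A2'[OF k] L(1) by (auto simp: c_def)
          moreover have "k = \<kappa>" using kk d jjk kf by simp
          ultimately show ?thesis using sk1 assms(3) by (simp add: Y_def)
        qed
      qed
      define C where "C = (\<lambda>k. c (k + f - 1))"
      have cmod: "c (k mod f) = c k" for k by (simp add: c_def lf_def)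
      have cf: "c (k + f) = c k" for k by (simp add: c_def lf_def)
      have Cper: "\<forall>k. C k = C (k mod f)"
      proof
        fix k
        have "(k mod f + (f - 1)) mod f = (k + (f - 1)) mod f" by (simp add: mod_add_left_eq)
        then have "c (k mod f + (f - 1)) = c (k + (f - 1))" by (metis cmod)
        then show "C k = C (k mod f)" unfolding C_def using f0 by simp
      qed
      have CS: "C (Suc k) = c k" for k unfolding C_def using f0 cf by simp
      have delta: "(\<lambda>k. Y k - s k) = (\<lambda>k. int p * C (Suc k) - C k)"
        by (auto simp: Y_def C_def cf)
      have OmY: "Omega p f i (\<lambda>k. Y k - s k) = N * C i" for i
        unfolding delta N_def using Omega_tele[OF f0 Cper] by simp
      have lfk: "lf \<kappa> = f - 1" using kf by (simp add: lf_def)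
      have Ck: "C \<kappa> = 1" using A2'[OF kf] lfk by (simp add: C_def c_def)
      define J' where "J' = {k. k < f \<and> int e \<le> Y k}"
      define x' where "x' = (\<lambda>k. if k < f then nat (if int e \<le> Y k then Y k - r k else Y k) else 0)"
      have sv': "sv a b (J', x') k = Y k" if k: "k < f" for k
      proof (cases "int e \<le> Y k")
        case True
        then have "r k \<le> Y k" using Yval[OF k] by linarith
        then show ?thesis using True k unfolding sv_def J'_def x'_def r_def by simp
      next
        case False
        then have "0 \<le> Y k" using Yval[OF k] r_rng[rule_format, OF k] by linarith
        then show ?thesis using False k unfolding sv_def J'_def x'_def by simp
      qed
      have mem: "(J', x') \<in> Sset p f e a b c1 c2"
      proof -
        have X1: "x' i \<le> e - 1" if i: "i < f" for i
        proof -
          have "(if int e \<le> Y i then Y i - r i else Y i) \<le> int e - 1" using Yval[OF i] by auto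
          then show ?thesis using i assms(3) unfolding x'_def by (simp add: nat_le_iff of_nat_diff)
        qed
        have O1: "Omega p f 0 (\<lambda>i. b i + sv a b (J', x') i) = Omega p f 0 (\<lambda>i. b i + s i) + N * C 0"
        proof -
          have "Omega p f 0 (\<lambda>i. b i + sv a b (J', x') i) = Omega p f 0 (\<lambda>i. (b i + s i) + (Y i - s i))"
            using sv' by (intro Omega_cong[OF f0]) simp
          also have "\<dots> = Omega p f 0 (\<lambda>i. b i + s i) + Omega p f 0 (\<lambda>i. Y i - s i)" by (rule Omega_add)
          also have "\<dots> = Omega p f 0 (\<lambda>i. b i + s i) + N * C 0" unfolding OmY[of 0] ..
          finally show ?thesis .
        qed
        have O2: "Omega p f 0 (\<lambda>i. a i + int e - sv a b (J', x') i) = Omega p f 0 (\<lambda>i. a i + int e - s i) - N * C 0"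
        proof -
          have "Omega p f 0 (\<lambda>i. a i + int e - sv a b (J', x') i) = Omega p f 0 (\<lambda>i. (a i + int e - s i) - (Y i - s i))"
            using sv' by (intro Omega_cong[OF f0]) simp
          also have "\<dots> = Omega p f 0 (\<lambda>i. a i + int e - s i) - Omega p f 0 (\<lambda>i. Y i - s i)" by (rule Omega_diff)
          also have "\<dots> = Omega p f 0 (\<lambda>i. a i + int e - s i) - N * C 0" unfolding OmY[of 0] ..
          finally show ?thesis .
        qed
        have g1: "[c1 = Omega p f 0 (\<lambda>i. b i + s i)] (mod N)" using cg1 unfolding sv_lam1 s_def .
        have g2: "[c2 = Omega p f 0 (\<lambda>i. a i + int e - s i)] (mod N)" using cg2 unfolding sv_lam2 s_def .
        have h1: "[c1 = Omega p f 0 (\<lambda>i. if i \<in> J' then a i + 1 + int (x' i) else b i + int (x' i))] (mod N)"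
        proof -
          have "N dvd (c1 - Omega p f 0 (\<lambda>i. b i + s i)) - N * C 0"
            using g1 unfolding cong_iff_dvd_diff by simp
          then show ?thesis unfolding sv_lam1 O1 cong_iff_dvd_diff by (simp add: algebra_simps)
        qed
        have h2: "[c2 = Omega p f 0 (\<lambda>i. if i \<notin> J' then a i + int e - int (x' i) else b i + int e - 1 - int (x' i))] (mod N)"
        proof -
          have "N dvd (c2 - Omega p f 0 (\<lambda>i. a i + int e - s i)) + N * C 0"
            using g2 unfolding cong_iff_dvd_diff by simp
          then show ?thesis unfolding sv_lam2 O2 cong_iff_dvd_diff by (simp add: algebra_simps)
        qed
        have A: "J' \<subseteq> {..<f}" by (auto simp: J'_def)
        have B: "\<forall>i\<ge>f. x' i = 0" by (simp add: x'_def)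
        show ?thesis unfolding Sset_def using A B X1 h1[unfolded N_def] h2[unfolded N_def] by simp
      qed
      have "prec p f a b (J', x') (J, x)" using Jx_max mem by blast
      then obtain m :: nat where m: "Omega p f \<kappa> (\<lambda>j. sv a b (J, x) j - sv a b (J', x') j) = N * int m"
        unfolding prec_def N_def using kf by blast
      have "Omega p f \<kappa> (\<lambda>j. sv a b (J, x) j - sv a b (J', x') j) = Omega p f \<kappa> (\<lambda>j. s j - Y j)"
        using sv' by (intro Omega_cong[OF f0]) (simp add: s_def)
      also have "\<dots> = - Omega p f \<kappa> (\<lambda>j. Y j - s j)" by (simp add: Omega_diff)
      also have "\<dots> = - N" using OmY[of \<kappa>] Ck by simp
      finally have "N * int m = - N" using m by simp
      moreover have "0 \<le> N * int m" using Npos by simp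
      ultimately show False using Npos by linarith
    qed
    have Mk': "M \<kappa>' = M (Suc \<kappa>)" using Mmod unfolding \<kappa>'_def by simp
    have rk': "W \<kappa>' = int p * M (Suc \<kappa>') - M \<kappa>'" using rel[of \<kappa>'] k'f by simp
    have "d \<kappa>' = int p * M (Suc \<kappa>') + (int (n \<kappa>') - M \<kappa>')" using rk' unfolding W_def by simp
    then have dv: "int p dvd int (n \<kappa>') - M \<kappa>'" using pd dvd_add_right_iff[of "int p" "int p * M (Suc \<kappa>')"] by simp
    have nk: "1 \<le> int (n \<kappa>')" "int (n \<kappa>') \<le> int p - 1" using n_rng[rule_format, OF k'f] assms(3) by linarith+
    have M01: "M \<kappa>' = 0 \<or> M \<kappa>' = 1" using key Mk' Mup[of \<kappa>'] by linarith
    have M1: "M \<kappa>' = 1"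
    proof (rule ccontr)
      assume "M \<kappa>' \<noteq> 1"
      then have "int p dvd int (n \<kappa>')" using M01 dv by simp
      then have "int p \<le> int (n \<kappa>')" using nk by (intro zdvd_imp_le) auto
      then show False using nk by linarith
    qed
    have n1: "int (n \<kappa>') = 1"
    proof (rule ccontr)
      assume "int (n \<kappa>') \<noteq> 1"
      then have "0 < int (n \<kappa>') - 1" using nk by linarith
      then have "int p \<le> int (n \<kappa>') - 1" using dv M1 by (intro zdvd_imp_le) auto
      then show False using nk by linarith
    qed
    have allW: "\<forall>k<f. W k = int p - 1" using Mup[of \<kappa>'] M1 by blast
    have e1: "e = 1" using n1 n_rng[rule_format, OF k'f] assms(3) by linarith
    have "\<forall>i<f. r i = int p \<and> n i = 1 \<and> t i = 0"
    proof (intro allI impI)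
      fix i assume i: "i < f"
      have X: "W i = int p - 1" using allW i by blast
      have R: "r i = int p" "int (n i) = 1" "t i = 0"
        using X W_eq[of i] s_val[rule_format, OF i] r_rng[rule_format, OF i] n_rng[rule_format, OF i] t_eq[of i] e1
        by linarith+
      then show "r i = int p \<and> n i = 1 \<and> t i = 0" by simp
    qed
    then show "e = 1 \<and> (\<forall>i<f. r i = int p \<and> n i = 1 \<and> t i = 0)" using e1 by blast
  qed
  show ?thesis using LHS main unfolding r_def t_def by simp
qed

end
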